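(* Let $\mathcal H$ be an $n$-dimensional Hilbert space and $N\ge n$. Then: (i) $\epsilon^{(1)}=\frac{n}{N}$, and $\mathcal F^{(1)}=\{(F,G): (F,G)\text{ is an }(N,n)\text{ dual pair with } \|f_i\|\,\|g_i\|=\frac nN \text{ for all } 1\le i\le N\}$. (ii) If $F$ is a tight frame for $\mathcal H$ with $N$ elements, then $(F,S_F^{-1}F)\in\mathcal F^{(1)}$ if and only if $F$ is an equal norm frame.
   Context: $\mathcal H$ is a complex Hilbert space of finite dimension $n$, inner product linear in the first argument. A finite sequence $F=\{f_i\}_{i=1}^N$ in $\mathcal H$ is a frame if there are constants $0<A\le B$ with $A\|f\|^2\le\sum_{i=1}^N|\langle f,f_i\rangle|^2\le B\|f\|^2$ for all $f\in\mathcal H$; it is tight if one can take $A=B$, and equal norm if $\|f_i\|$ is independent of $i$. The frame operator is $S_F f=\sum_{i=1}^N\langle f,f_i\rangle f_i$ (invertible, positive), and the canonical dual is $S_F^{-1}F=\{S_F^{-1}f_i\}_{i=1}^N$. A sequence $G=\{g_i\}_{i=1}^N$ is a dual of the frame $F$ if $f=\sum_{i=1}^N\langle f,g_i\rangle f_i$ for all $f\in\mathcal H$; then $(F,G)$ is called an $(N,n)$ dual pair. For $1\le m\le N$, $\mathcal A_m$ is the set of $m$-element subsets $\Lambda\subseteq\{1,\dots,N\}$, and the error operator is $E_{\Lambda,F,G}f=\sum_{i\in\Lambda}\langle f,f_i\rangle g_i$. With $\|T\|_{\mathcal F}=\sqrt{\operatorname{tr}(T^*T)}$ the Frobenius norm,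 set $\epsilon^{(m)}_{F,G}=\max_{\Lambda\in\mathcal A_m}\|E_{\Lambda,F,G}\|_{\mathcal F}$; $\epsilon^{(1)}=\inf\{\epsilon^{(1)}_{F,G}: (F,G)\text{ an }(N,n)\text{ dual pair for }\mathcal H\}$; $\mathcal F^{(1)}=\{(F,G):\epsilon^{(1)}_{F,G}=\epsilon^{(1)}\}$; and for $m>1$, $\epsilon^{(m)}=\inf\{\epsilon^{(m)}_{F,G}:(F,G)\in\mathcal F^{(m-1)}\}$, $\mathcal F^{(m)}=\{(F,G)\in\mathcal F^{(m-1)}:\epsilon^{(m)}_{F,G}=\epsilon^{(m)}\}$. *)

theory Defs
  imports "HOL-Analysis.Analysis"
begin

text \<open>The n-dimensional complex Hilbert space is modelled as complex^'n (n = CARD('n)),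
  with the standard inner product, linear in the first argument. Frame vectors are
  indexed by 1..N.\<close>

definition cinner :: "complex^'n \<Rightarrow> complex^'n \<Rightarrow> complex" where
  "cinner x y = (\<Sum>i\<in>UNIV. x $ i * cnj (y $ i))"

definition is_frame :: "nat \<Rightarrow> (nat \<Rightarrow> complex^'n) \<Rightarrow> bool" where
  "is_frame N F \<longleftrightarrow> (\<exists>A B. 0 < A \<and> A \<le> B \<and>
     (\<forall>f. A * (norm f)^2 \<le> (\<Sum>i=1..N. (cmod (cinner f (F i)))^2)
        \<and> (\<Sum>i=1..N. (cmod (cinner f (F i)))^2) \<le> B * (norm f)^2))"

definition tight_frame :: "nat \<Rightarrow> (nat \<Rightarrow> complex^'n) \<Rightarrow> bool" where
  "tight_frame N F \<longleftrightarrow> (\<exists>A. 0 < A \<and>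
     (\<forall>f. (\<Sum>i=1..N. (cmod (cinner f (F i)))^2) = A * (norm f)^2))"

definition equal_norm :: "nat \<Rightarrow> (nat \<Rightarrow> complex^'n) \<Rightarrow> bool" where
  "equal_norm N F \<longleftrightarrow> (\<exists>c. \<forall>i\<in>{1..N}. norm (F i) = c)"

definition frame_op :: "nat \<Rightarrow> (nat \<Rightarrow> complex^'n) \<Rightarrow> complex^'n \<Rightarrow> complex^'n" where
  "frame_op N F f = (\<Sum>i=1..N. cinner f (F i) *s F i)"

definition canonical_dual :: "nat \<Rightarrow> (nat \<Rightarrow> complex^'n) \<Rightarrow> nat \<Rightarrow> complex^'n" where
  "canonical_dual N F i = inv (frame_op N F) (F i)"

definition dual_pair :: "nat \<Rightarrow> (nat \<Rightarrow> complex^'n) \<Rightarrow> (nat \<Rightarrow> complex^'n) \<Rightarrow> bool" where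
  "dual_pair N F G \<longleftrightarrow> is_frame N F \<and> (\<forall>f. f = (\<Sum>i=1..N. cinner f (G i) *s F i))"

definition error_op :: "nat set \<Rightarrow> (nat \<Rightarrow> complex^'n) \<Rightarrow> (nat \<Rightarrow> complex^'n) \<Rightarrow> complex^'n \<Rightarrow> complex^'n" where
  "error_op \<Lambda> F G f = (\<Sum>i\<in>\<Lambda>. cinner f (F i) *s G i)"

text \<open>Frobenius norm sqrt(tr(T*T)), computed with the standard orthonormal basis.\<close>
definition frob_norm :: "(complex^'n \<Rightarrow> complex^'n) \<Rightarrow> real" where
  "frob_norm T = sqrt (\<Sum>k\<in>UNIV. (norm (T (axis k 1)))^2)"

definition eps_m :: "nat \<Rightarrow> nat \<Rightarrow> (nat \<Rightarrow> complex^'n) \<Rightarrow> (nat \<Rightarrow> complex^'n) \<Rightarrow> real" where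
  "eps_m m N F G = Max {frob_norm (error_op \<Lambda> F G) | \<Lambda>. \<Lambda> \<subseteq> {1..N} \<and> card \<Lambda> = m}"

definition eps1 :: "('n::finite) itself \<Rightarrow> nat \<Rightarrow> real" where
  "eps1 _ N = Inf {eps_m 1 N F G | F G. dual_pair N (F :: nat \<Rightarrow> complex^'n) G}"

definition F1 :: "nat \<Rightarrow> ((nat \<Rightarrow> complex^('n::finite)) \<times> (nat \<Rightarrow> complex^'n)) set" where
  "F1 N = {(F, G). dual_pair N F G \<and> eps_m 1 N F G = eps1 TYPE('n) N}"

end

theory Submission
  imports Defs
begin

lemma norm_sq_vec: "(norm (x::complex^'n))^2 = (\<Sum>i\<in>UNIV. (cmod (x$i))^2)"
  unfolding norm_vec_def L2_set_def by (simp add: sum_nonneg)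

lemma cinner_self: "cinner x x = complex_of_real ((norm x)^2)"
  unfolding cinner_def norm_sq_vec of_real_sum by (rule sum.cong) (simp_all add: complex_norm_square[symmetric])

lemma cinner_cs: "cmod (cinner x y) \<le> norm x * norm y"
proof -
  have "cmod (cinner x y) \<le> (\<Sum>i\<in>UNIV. cmod (x$i) * cmod (y$i))"
    unfolding cinner_def by (rule order_trans[OF norm_sum]) (simp add: norm_mult)
  also have "\<dots> \<le> L2_set (\<lambda>i. cmod (x$i)) UNIV * L2_set (\<lambda>i. cmod (y$i)) UNIV"
    using L2_set_mult_ineq[of "\<lambda>i. cmod (x$i)" "\<lambda>i. cmod (y$i)" UNIV] by simp
  finally show ?thesis by (simp add: norm_vec_def)
qed

lemma cinner_add_left: "cinner (x + y) z = cinner x z + cinner y z"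
  unfolding cinner_def by (simp add: distrib_right sum.distrib)
lemma cinner_add_right: "cinner x (y + z) = cinner x y + cinner x z"
  unfolding cinner_def by (simp add: distrib_left sum.distrib)
lemma cinner_scale_left: "cinner (c *s x) y = c * cinner x y"
  unfolding cinner_def by (simp add: sum_distrib_left mult.assoc)
lemma cinner_scale_right: "cinner x (c *s y) = cnj c * cinner x y"
  unfolding cinner_def by (simp add: sum_distrib_left mult.assoc mult.left_commute)
lemma cinner_sum_left: "finite A \<Longrightarrow> cinner (\<Sum>i\<in>A. f i) z = (\<Sum>i\<in>A. cinner (f i) z)"
  by (induct A rule: finite_induct) (simp_all add: cinner_add_left, simp add: cinner_def)
lemma cinner_commute: "cinner y x = cnj (cinner x y)"
  unfolding cinner_def by (simp add: mult.commute)
lemma cinner_zero_imp: "cinner x x = 0 \<Longrightarrow> x = 0"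
  by (simp add: cinner_self)
lemma norm_smult: "norm (c *s (x::complex^'n)) = cmod c * norm x"
proof -
  have "(norm (c *s x))^2 = (cmod c * norm x)^2"
    unfolding norm_sq_vec power_mult_distrib by (simp add: norm_mult power_mult_distrib sum_distrib_left)
  thus ?thesis by (simp add: power2_eq_iff_nonneg)
qed
lemma cinner_axis: "cinner (axis k 1) y = cnj (y $ k)"
  unfolding cinner_def axis_def by (simp add: if_distrib[where f="\<lambda>a. a * b" for b] cong: if_cong)

lemma trace_lemma:
  assumes "dual_pair N F (G :: nat \<Rightarrow> complex^'n)"
  shows "of_nat CARD('n) = (\<Sum>i=1..N. cinner (F i) (G i))"
proof -
  have rec: "\<And>f. f = (\<Sum>i=1..N. cinner f (G i) *s F i)" using assms by (simp add: dual_pair_def)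
  have k1: "1 = (\<Sum>i=1..N. cnj (G i $ k) * F i $ k)" for k
  proof -
    have "axis k 1 $ k = (\<Sum>i=1..N. cinner (axis k 1) (G i) *s F i) $ k"
      using rec[of "axis k (1::complex)"] by metis
    thus ?thesis by (simp add: cinner_axis)
  qed
  have "of_nat CARD('n) = (\<Sum>k\<in>(UNIV::'n set). (1::complex))" by simp
  also have "\<dots> = (\<Sum>k\<in>UNIV. \<Sum>i=1..N. cnj (G i $ k) * F i $ k)" using k1 by simp
  also have "\<dots> = (\<Sum>i=1..N. cinner (F i) (G i))"
    unfolding cinner_def by (subst sum.swap) (simp add: mult.commute)
  finally show ?thesis .
qed

lemma frob_single: "frob_norm (error_op {i} F G) = norm (F i) * norm (G (i::nat) :: complex^'n)"
proof -
  have "(\<Sum>k\<in>UNIV. (norm (error_op {i} F G (axis k 1)))^2) = (norm (F i) * norm (G i))^2"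
    unfolding error_op_def by (simp add: cinner_axis norm_smult power_mult_distrib
        norm_sq_vec[of "F i"] sum_distrib_right)
  thus ?thesis unfolding frob_norm_def by simp
qed

lemma eps_m1:
  assumes "N \<ge> 1"
  shows "eps_m 1 N F G = Max ((\<lambda>i. norm (F i) * norm (G i :: complex^'n)) ` {1..N})"
proof -
  have "{frob_norm (error_op \<Lambda> F G) | \<Lambda>. \<Lambda> \<subseteq> {1..N} \<and> card \<Lambda> = 1}
        = (\<lambda>i. norm (F i) * norm (G i)) ` {1..N}"
    apply (auto simp: card_1_singleton_iff frob_single)
    subgoal for i by (rule exI[of _ "{i}"]) (simp add: frob_single)
    done
  thus ?thesis unfolding eps_m_def by simp
qed

lemma lower_sum:
  assumes "dual_pair N F (G :: nat \<Rightarrow> complex^'n)"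
  shows "real CARD('n) \<le> (\<Sum>i=1..N. norm (F i) * norm (G i))"
proof -
  have "real CARD('n) = cmod (of_nat CARD('n))" by simp
  also have "\<dots> = cmod (\<Sum>i=1..N. cinner (F i) (G i))" using trace_lemma[OF assms] by simp
  also have "\<dots> \<le> (\<Sum>i=1..N. cmod (cinner (F i) (G i)))" by (rule norm_sum)
  also have "\<dots> \<le> (\<Sum>i=1..N. norm (F i) * norm (G i))" by (rule sum_mono) (rule cinner_cs)
  finally show ?thesis .
qed

lemma parseval_frame:
  assumes rec: "\<And>f. f = (\<Sum>i=1..N. cinner f (F i) *s F i)"
  shows "is_frame N (F :: nat \<Rightarrow> complex^'n)"
proof -
  have "(\<Sum>i=1..N. (cmod (cinner f (F i)))^2) = (norm f)^2" for f
  proof -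
    have "complex_of_real ((norm f)^2) = cinner f f" by (simp add: cinner_self)
    also have "\<dots> = cinner (\<Sum>i=1..N. cinner f (F i) *s F i) f" using rec[of f] by simp
    also have "\<dots> = (\<Sum>i=1..N. cinner f (F i) * cnj (cinner f (F i)))"
      by (simp add: cinner_sum_left cinner_scale_left cinner_commute[of f])
    also have "\<dots> = complex_of_real (\<Sum>i=1..N. (cmod (cinner f (F i)))^2)"
      unfolding of_real_sum by (rule sum.cong) (rule refl, rule complex_norm_square[symmetric])
    finally show ?thesis by (simp only: of_real_eq_iff)
  qed
  thus ?thesis unfolding is_frame_def by (intro exI[of _ 1]) simp
qed

lemma geo_shift: "(\<Sum>i=1..N. (z::complex)^i) = z * (\<Sum>i<N. z^i)"
  by (induct N) (simp_all add: distrib_left)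

lemma root_sum:
  fixes d :: int
  assumes "d \<noteq> 0" "\<bar>d\<bar> < int N"
  shows "(\<Sum>i=1..N. cis (2*pi*real i*real_of_int d/real N)) = 0"
proof -
  define z where "z = cis (2*pi*real_of_int d/real N)"
  have N0: "N > 0" using assms by linarith
  have pw: "cis (2*pi*real i*real_of_int d/real N) = z^i" for i
    unfolding z_def by (subst Complex.DeMoivre) (simp add: field_simps)
  have zN: "z^N = 1"
  proof -
    have "z^N = cis (real N * (2*pi*real_of_int d/real N))" unfolding z_def by (rule Complex.DeMoivre)
    also have "real N * (2*pi*real_of_int d/real N) = 2*pi*real_of_int d" using N0 by simp
    also have "cis (2*pi*real_of_int d) = 1" by (rule cis_multiple_2pi) simp
    finally show ?thesis .
  qed
  have z1: "z \<noteq> 1"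
  proof
    assume "z = 1"
    then have "exp (\<i> * complex_of_real (2*pi*real_of_int d/real N)) = 1"
      unfolding z_def cis_conv_exp by simp
    then obtain m :: int where m: "2*pi*real_of_int d/real N = of_int (2*m) * pi"
      unfolding exp_eq_1 by auto
    then have "real_of_int d = real_of_int m * real N" using N0 by (simp add: field_simps)
    then have "d = m * int N" by (metis of_int_eq_iff of_int_mult of_int_of_nat_eq)
    with assms have "m \<noteq> 0" by auto
    then have "1 \<le> \<bar>m\<bar>" by linarith
    then have "1 * int N \<le> \<bar>m\<bar> * int N" by (rule mult_right_mono) simp
    moreover have "\<bar>d\<bar> = \<bar>m\<bar> * int N" using \<open>d = m * int N\<close> by (simp add: abs_mult)
    ultimately show False using assms(2) by linarith
  qed
  have "(\<Sum>i=1..N. cis (2*pi*real i*real_of_int d/real N)) = z * (\<Sum>i<N. z^i)"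
    unfolding pw by (rule geo_shift)
  also have "\<dots> = 0" using z1 zN by (simp add: geometric_sum)
  finally show ?thesis .
qed

lemma exists_optimal:
  assumes NN: "N \<ge> CARD('n)"
  shows "\<exists>F G. dual_pair N F (G::nat \<Rightarrow> complex^'n) \<and>
     (\<forall>i\<in>{1..N}. norm (F i) * norm (G i) = real CARD('n) / real N)"
proof -
  obtain e :: "'n \<Rightarrow> nat" where e: "bij_betw e UNIV {0..<CARD('n)}"
    using ex_bij_betw_finite_nat[of "UNIV :: 'n set"] by auto
  have einj: "e j = e k \<Longrightarrow> j = k" for j k using e by (auto simp: bij_betw_def inj_def)
  have elt: "e k < CARD('n)" for k using e by (auto simp: bij_betw_def)
  have "0 < CARD('n)" by simp
  then have N0: "N > 0" using NN by linarith
  define s where "s = complex_of_real (sqrt (real N))"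
  have s0: "s \<noteq> 0" using N0 by (simp add: s_def)
  have ss: "s * cnj s = of_nat N" unfolding s_def by (simp flip: of_real_mult)
  define F :: "nat \<Rightarrow> complex^'n" where
    "F i = (\<chi> k. cis (2*pi*real i*real (e k)/real N) / s)" for i
  have arg: "2*pi*real i*real (e k)/real N + - (2*pi*real i*real (e j)/real N) = 2*pi*real i*real_of_int (int (e k) - int (e j))/real N" for i j k
    using N0 by (simp add: field_simps)
  have prod: "F i $ k * cnj (F i $ j) = cis (2*pi*real i*real_of_int (int (e k) - int (e j))/real N) / of_nat N" for i j k
  proof -
    have "F i $ k * cnj (F i $ j) = cis (2*pi*real i*real (e k)/real N) * cis (- (2*pi*real i*real (e j)/real N)) / (s * cnj s)"
      by (simp add: F_def cis_cnj)
    also have "\<dots> = cis (2*pi*real i*real_of_int (int (e k) - int (e j))/real N) / of_nat N"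
      unfolding cis_mult ss arg ..
    finally show ?thesis .
  qed
  have orth: "(\<Sum>i=1..N. F i $ k * cnj (F i $ j)) = (if k = j then 1 else 0)" for j k
  proof (cases "k = j")
    case True
    then show ?thesis using N0 by (simp add: prod)
  next
    case False
    have d0: "int (e k) - int (e j) \<noteq> 0" using einj False by auto
    have db: "\<bar>int (e k) - int (e j)\<bar> < int N" using elt[of k] elt[of j] NN by linarith
    have "(\<Sum>i=1..N. F i $ k * cnj (F i $ j)) = (\<Sum>i=1..N. cis (2*pi*real i*real_of_int (int (e k) - int (e j))/real N)) / of_nat N"
      by (simp add: prod sum_divide_distrib)
    also have "\<dots> = 0" unfolding root_sum[OF d0 db] by simp
    finally show ?thesis using False by simp
  qed
  have rec: "f = (\<Sum>i=1..N. cinner f (F i) *s F i)" for f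
  proof (subst vec_eq_iff, rule allI)
    fix k
    have "(\<Sum>i=1..N. cinner f (F i) *s F i) $ k = (\<Sum>i=1..N. \<Sum>j\<in>UNIV. f $ j * (F i $ k * cnj (F i $ j)))"
      by (simp add: cinner_def sum_distrib_left mult_ac)
    also have "\<dots> = (\<Sum>j\<in>UNIV. f $ j * (\<Sum>i=1..N. F i $ k * cnj (F i $ j)))"
      by (subst sum.swap) (simp add: sum_distrib_left)
    also have "\<dots> = (\<Sum>j\<in>UNIV. if k = j then f $ j else 0)" unfolding orth by (rule sum.cong) auto
    also have "\<dots> = f $ k" by simp
    finally show "f $ k = (\<Sum>i=1..N. cinner f (F i) *s F i) $ k" by simp
  qed
  have nrm: "norm (F i) * norm (F i) = real CARD('n) / real N" for i
  proof -
    have c: "cmod (F i $ k) ^ 2 = 1 / real N" for k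
    proof -
      have "complex_of_real (cmod (F i $ k) ^ 2) = F i $ k * cnj (F i $ k)" by (rule complex_norm_square)
      also have "\<dots> = 1 / of_nat N" using N0 by (simp add: prod)
      finally show ?thesis by (metis of_real_1 of_real_divide of_real_eq_iff of_real_of_nat_eq)
    qed
    show ?thesis by (simp add: power2_eq_square[symmetric] norm_sq_vec c)
  qed
  have "dual_pair N F F" unfolding dual_pair_def using rec parseval_frame[OF rec] by blast
  thus ?thesis using nrm by blast
qed

lemma polar:
  fixes T :: "complex^'n \<Rightarrow> complex^'n"
  assumes add: "\<And>x y. T (x + y) = T x + T y"
    and sc: "\<And>c x. T (c *s x) = c *s T x"
    and q: "\<And>x. cinner (T x) x = 0"
  shows "T x = 0"
proof -
  have ab: "cinner (T x) y + cinner (T y) x = 0" for y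
    using q[of "x + y"] q[of x] q[of y] by (simp add: add cinner_add_left cinner_add_right add.commute)
  have ab2: "- \<i> * cinner (T x) y + \<i> * cinner (T y) x = 0" for y
    using q[of "x + \<i> *s y"] q[of x] q[of y]
    by (simp add: add sc cinner_add_left cinner_add_right cinner_scale_left cinner_scale_right)
  have "cinner (T x) y = 0" for y
  proof -
    have "\<i> * (cinner (T x) y + cinner (T y) x) = 0" using ab by simp
    with ab2[of y] have "2 * \<i> * cinner (T x) y = 0" by (simp add: algebra_simps)
    thus ?thesis by simp
  qed
  from this[of "T x"] show ?thesis by (rule cinner_zero_imp)
qed

lemma frame_op_add: "frame_op N F (x + y) = frame_op N F x + frame_op N F y"
  unfolding frame_op_def by (simp add: vec_eq_iff cinner_add_left distrib_right sum.distrib)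
lemma frame_op_scale: "frame_op N F (c *s x) = c *s frame_op N F x"
  unfolding frame_op_def by (simp add: vec_eq_iff cinner_scale_left sum_distrib_left mult.assoc)

lemma tight_op:
  assumes A: "\<forall>f. (\<Sum>i=1..N. (cmod (cinner f (F i)))^2) = A * (norm f)^2"
  shows "frame_op N F f = complex_of_real A *s (f :: complex^'n)"
proof -
  define T where "T x = frame_op N F x - complex_of_real A *s x" for x
  have "T f = 0"
  proof (rule polar[where T=T])
    show "T (x + y) = T x + T y" for x y
      unfolding T_def frame_op_add by (simp add: vec_eq_iff algebra_simps)
    show "T (c *s x) = c *s T x" for c x
      unfolding T_def frame_op_scale by (simp add: vec_eq_iff algebra_simps)
    show "cinner (T x) x = 0" for x
    proof -
      have "cinner (frame_op N F x) x = (\<Sum>i=1..N. cinner x (F i) * cnj (cinner x (F i)))"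
        unfolding frame_op_def by (simp add: cinner_sum_left cinner_scale_left cinner_commute[of x])
      also have "\<dots> = complex_of_real (\<Sum>i=1..N. (cmod (cinner x (F i)))^2)"
        unfolding of_real_sum by (rule sum.cong) (rule refl, rule complex_norm_square[symmetric])
      also have "\<dots> = cinner (complex_of_real A *s x) x"
        using A by (simp add: cinner_scale_left cinner_self)
      finally show ?thesis
        unfolding T_def by (simp add: cinner_def algebra_simps sum_subtractf)
    qed
  qed
  thus ?thesis unfolding T_def by simp
qed

lemma tight_dual:
  assumes "tight_frame N (F :: nat \<Rightarrow> complex^'n)"
  obtains A where "A > 0" "\<And>i. canonical_dual N F i = complex_of_real (1/A) *s F i"
    "dual_pair N F (canonical_dual N F)"
proof -
  obtain A where A0: "A > 0" and A: "\<forall>f. (\<Sum>i=1..N. (cmod (cinner f (F i)))^2) = A * (norm f)^2"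
    using assms unfolding tight_frame_def by blast
  have op: "frame_op N F = (\<lambda>f. complex_of_real A *s f)" using tight_op[OF A] by (rule ext)
  have injo: "inj (frame_op N F)" unfolding op inj_def using A0 by (simp add: vec_eq_iff)
  have cd: "canonical_dual N F i = complex_of_real (1/A) *s F i" for i
    unfolding canonical_dual_def
    by (rule inv_f_eq[OF injo]) (use A0 in \<open>simp add: op vec_eq_iff\<close>)
  have fr: "is_frame N F" unfolding is_frame_def using A0 A by (intro exI[of _ A]) simp
  have rec: "f = (\<Sum>i=1..N. cinner f (canonical_dual N F i) *s F i)" for f
  proof -
    have "(\<Sum>i=1..N. cinner f (canonical_dual N F i) *s F i) = complex_of_real (1/A) *s frame_op N F f"
      unfolding cd frame_op_def
      by (simp add: vec_eq_iff cinner_scale_right sum_distrib_left mult.assoc)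
    also have "\<dots> = f" using A0 by (simp add: op vec_eq_iff)
    finally show ?thesis by simp
  qed
  show ?thesis
    by (rule that[OF A0 cd]) (unfold dual_pair_def, use fr rec in blast)
qed

theorem theorem3p1:
  fixes N :: nat
  assumes "N \<ge> CARD('n)"
  shows "eps1 TYPE('n) N = real CARD('n) / real N
    \<and> F1 N = {(F :: nat \<Rightarrow> complex^'n, G). dual_pair N F G \<and>
         (\<forall>i\<in>{1..N}. norm (F i) * norm (G i) = real CARD('n) / real N)}
    \<and> (\<forall>F :: nat \<Rightarrow> complex^'n. tight_frame N F \<longrightarrow>
         ((F, canonical_dual N F) \<in> F1 N \<longleftrightarrow> equal_norm N F))"
proof -
  define r where "r = real CARD('n) / real N"
  have "0 < CARD('n)" by simp
  then have N0: "N > 0" using assms by linarith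
  have rN: "real N * r = real CARD('n)" using N0 by (simp add: r_def)
  have lowM: "r \<le> eps_m 1 N F G" if dp: "dual_pair N F (G :: nat \<Rightarrow> complex^'n)" for F G
  proof -
    define M where "M = Max ((\<lambda>i. norm (F i) * norm (G i)) ` {1..N})"
    have em: "eps_m 1 N F G = M" unfolding M_def by (rule eps_m1) (use N0 in simp)
    have "real CARD('n) \<le> (\<Sum>i=1..N. norm (F i) * norm (G i))" by (rule lower_sum[OF dp])
    also have "\<dots> \<le> (\<Sum>i=1..N. M)" unfolding M_def by (rule sum_mono) simp
    also have "\<dots> = real N * M" by simp
    finally have "real N * r \<le> real N * M" using rN by simp
    then have "r \<le> M" using N0 by simp
    thus ?thesis using em by simp
  qed
  have charM: "eps_m 1 N F G = r \<longleftrightarrow> (\<forall>i\<in>{1..N}. norm (F i) * norm (G i) = r)"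
    if dp: "dual_pair N F (G :: nat \<Rightarrow> complex^'n)" for F G
  proof
    assume "\<forall>i\<in>{1..N}. norm (F i) * norm (G i) = r"
    then have "(\<lambda>i. norm (F i) * norm (G i)) ` {1..N} = {r}" using N0 by force
    thus "eps_m 1 N F G = r" using N0 eps_m1[of N F G] by simp
  next
    assume e: "eps_m 1 N F G = r"
    have le: "norm (F i) * norm (G i) \<le> r" if "i \<in> {1..N}" for i
      using e that N0 eps_m1[of N F G] by simp
    show "\<forall>i\<in>{1..N}. norm (F i) * norm (G i) = r"
    proof (rule ccontr)
      assume "\<not> ?thesis"
      then obtain j where "j \<in> {1..N}" "norm (F j) * norm (G j) \<noteq> r" by blast
      with le have "\<exists>j\<in>{1..N}. norm (F j) * norm (G j) < r" by force
      then have "(\<Sum>i=1..N. norm (F i) * norm (G i)) < (\<Sum>i=1..N. r)"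
        by (intro sum_strict_mono_ex1) (auto intro: le)
      also have "\<dots> = real CARD('n)" using rN by simp
      finally show False using lower_sum[OF dp] by simp
    qed
  qed
  have E: "eps1 TYPE('n) N = r"
  proof -
    obtain F0 G0 where d0: "dual_pair N F0 (G0 :: nat \<Rightarrow> complex^'n)"
      and p0: "\<forall>i\<in>{1..N}. norm (F0 i) * norm (G0 i) = r"
      using exists_optimal[OF assms] unfolding r_def by blast
    have "eps_m 1 N F0 G0 = r" using charM[OF d0] p0 by simp
    then have "r \<in> {eps_m 1 N F G | F G. dual_pair N (F :: nat \<Rightarrow> complex^'n) G}" using d0 by force
    moreover have "\<And>x. x \<in> {eps_m 1 N F G | F G. dual_pair N (F :: nat \<Rightarrow> complex^'n) G} \<Longrightarrow> r \<le> x"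
      using lowM by blast
    ultimately show ?thesis unfolding eps1_def by (rule cInf_eq_minimum)
  qed
  have F1eq: "F1 N = {(F :: nat \<Rightarrow> complex^'n, G). dual_pair N F G \<and>
         (\<forall>i\<in>{1..N}. norm (F i) * norm (G i) = r)}"
    unfolding F1_def E using charM by blast
  have T: "(F, canonical_dual N F) \<in> F1 N \<longleftrightarrow> equal_norm N F"
    if tf: "tight_frame N (F :: nat \<Rightarrow> complex^'n)" for F
  proof -
    obtain A where A0: "A > 0" and cd: "\<And>i. canonical_dual N F i = complex_of_real (1/A) *s F i"
      and dp: "dual_pair N F (canonical_dual N F)" using tight_dual[OF tf] by blast
    have pr: "norm (F i) * norm (canonical_dual N F i) = (norm (F i))^2 / A" for i
      using A0 by (simp add: cd norm_smult power2_eq_square norm_divide)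
    have "complex_of_real (real CARD('n)) = (\<Sum>i=1..N. cinner (F i) (canonical_dual N F i))"
      unfolding of_real_of_nat_eq by (rule trace_lemma[OF dp])
    also have "\<dots> = (\<Sum>i=1..N. complex_of_real ((norm (F i))^2 / A))"
      by (rule sum.cong) (simp_all add: cd cinner_scale_right cinner_self)
    also have "\<dots> = complex_of_real (\<Sum>i=1..N. (norm (F i))^2 / A)" by (rule of_real_sum[symmetric])
    finally have tr: "real CARD('n) = (\<Sum>i=1..N. (norm (F i))^2 / A)"
      by (simp only: of_real_eq_iff)
    have "(F, canonical_dual N F) \<in> F1 N \<longleftrightarrow> (\<forall>i\<in>{1..N}. (norm (F i))^2 / A = r)"
      using F1eq dp pr by simp
    also have "\<dots> \<longleftrightarrow> equal_norm N F"
    proof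
      assume h: "\<forall>i\<in>{1..N}. (norm (F i))^2 / A = r"
      have "norm (F i) = sqrt (r * A)" if "i \<in> {1..N}" for i
      proof -
        have "(norm (F i))^2 = r * A" using h that A0 by (simp add: field_simps)
        then have "sqrt ((norm (F i))^2) = sqrt (r * A)" by simp
        thus ?thesis by simp
      qed
      thus "equal_norm N F" unfolding equal_norm_def by blast
    next
      assume "equal_norm N F"
      then obtain c where c: "\<forall>i\<in>{1..N}. norm (F i) = c" unfolding equal_norm_def by blast
      have "real CARD('n) = real N * (c^2 / A)" using tr c by simp
      then have "c^2 / A = r" using rN N0 by (metis mult_left_cancel of_nat_0_less_iff less_irrefl)
      thus "\<forall>i\<in>{1..N}. (norm (F i))^2 / A = r" using c by simp
    qed
    finally show ?thesis .
  qed
  show ?thesis using E F1eq T unfolding r_def by blast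
qed
end
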